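(* Let $f:(0,\infty)\to\mathbb{R}$ be a convex function with $f(1)=0$, and assume that the function $g:(0,\infty)\to\mathbb{R}$ defined by $g(t)=-t f(t)$ is also convex. Let $P$ and $Q$ be two probability distributions on a finite set $\mathcal{A}$ that are positive on $\mathcal{A}$. Then $$\min_{x\in\mathcal{A}}\frac{P(x)}{Q(x)}\cdot D_f(P\|Q)\;\le\; -D_g(P\|Q)-f\bigl(1+\chi^2(P,Q)\bigr)\;\le\;\max_{x\in\mathcal{A}}\frac{P(x)}{Q(x)}\cdot D_f(P\|Q).$$
   Context: For a function $h:(0,\infty)\to\mathbb{R}$ and positive probability distributions $P,Q$ on a finite set $\mathcal{A}$, $D_h(P\|Q)=\sum_{x\in\mathcal{A}}Q(x)\,h\!\left(\frac{P(x)}{Q(x)}\right)$ (the $h$-divergence). The chi-squared divergence is $\chi^2(P,Q)=\sum_{x\in\mathcal{A}}\frac{(P(x)-Q(x))^2}{Q(x)}=\sum_{x\in\mathcal{A}}\frac{P(x)^2}{Q(x)}-1$. *)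

theory Defs
  imports "HOL-Analysis.Analysis"
begin

definition hdiv :: "(real \<Rightarrow> real) \<Rightarrow> 'a set \<Rightarrow> ('a \<Rightarrow> real) \<Rightarrow> ('a \<Rightarrow> real) \<Rightarrow> real" where
  "hdiv h A P Q = (\<Sum>x\<in>A. Q x * h (P x / Q x))"

definition chi2 :: "'a set \<Rightarrow> ('a \<Rightarrow> real) \<Rightarrow> ('a \<Rightarrow> real) \<Rightarrow> real" where
  "chi2 A P Q = (\<Sum>x\<in>A. (P x - Q x)^2 / Q x)"

end

theory Submission
  imports Defs
begin

lemma subgrad:
  fixes f :: "real \<Rightarrow> real"
  assumes f: "convex_on {0<..} f" and c: "c > 0"
  shows "\<exists>s. \<forall>y>0. f y \<ge> f c + s * (y - c)"
proof -
  have three: "(f c - f a)/(c - a) \<le> (f b - f c)/(b - c)" if "0 < a" "a < c" "c < b" for a b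
  proof -
    have "(f a - f c) / (a - c) \<le> (f a - f b) / (a - b)"
         "(f a - f b) / (a - b) \<le> (f c - f b) / (c - b)"
      using convex_on_slope_le[OF f, of a b c] that by auto
    moreover have "(f a - f c) / (a - c) = (f c - f a)/(c - a)"
      by (metis minus_diff_eq minus_divide_divide)
    moreover have "(f c - f b) / (c - b) = (f b - f c)/(b - c)"
      by (metis minus_diff_eq minus_divide_divide)
    ultimately show ?thesis by linarith
  qed
  define S where "S = (\<lambda>a. (f c - f a)/(c - a)) ` {0<..<c}"
  define s where "s = Sup S"
  have ne: "S \<noteq> {}" unfolding S_def using c by (auto intro: exI[of _ "c/2"])
  have bdd: "bdd_above S"
    unfolding S_def bdd_above_def using three[of _ "c+1"] c by (intro exI[of _ "f (c + 1) - f c"]) auto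
  have le: "(f c - f a)/(c - a) \<le> s" if "0 < a" "a < c" for a
    unfolding s_def using bdd that by (auto intro!: cSup_upper simp: S_def)
  have ge: "s \<le> (f b - f c)/(b - c)" if "c < b" for b
    unfolding s_def using ne that three c by (auto intro!: cSup_least simp: S_def)
  show ?thesis
  proof (intro exI allI impI)
    fix y :: real assume y: "y > 0"
    consider "y < c" | "y = c" | "y > c" by linarith
    then show "f y \<ge> f c + s * (y - c)"
    proof cases
      case 1
      then have "(f c - f y)/(c - y) \<le> s" using le y by auto
      then have "f c - f y \<le> s * (c - y)" using 1 by (simp add: divide_le_eq)
      then show ?thesis by (simp add: algebra_simps)
    next
      case 2 then show ?thesis by simp
    next
      case 3
      then have "s \<le> (f y - f c)/(y - c)" using ge by auto
      then have "s * (y - c) \<le> f y - f c" using 3 by (simp add: le_divide_eq)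
      then show ?thesis by simp
    qed
  qed
qed

theorem proposition5:
  fixes f g :: "real \<Rightarrow> real" and A :: "'a set" and P Q :: "'a \<Rightarrow> real"
  assumes f_convex: "convex_on {0<..} f"
    and f1: "f 1 = 0"
    and g_def: "\<And>t. t > 0 \<Longrightarrow> g t = - t * f t"
    and g_convex: "convex_on {0<..} g"
    and finA: "finite A" and neA: "A \<noteq> {}"
    and Ppos: "\<And>x. x \<in> A \<Longrightarrow> P x > 0"
    and Qpos: "\<And>x. x \<in> A \<Longrightarrow> Q x > 0"
    and Psum: "(\<Sum>x\<in>A. P x) = 1"
    and Qsum: "(\<Sum>x\<in>A. Q x) = 1"
  shows "(MIN x\<in>A. P x / Q x) * hdiv f A P Q \<le> - hdiv g A P Q - f (1 + chi2 A P Q)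
       \<and> - hdiv g A P Q - f (1 + chi2 A P Q) \<le> (MAX x\<in>A. P x / Q x) * hdiv f A P Q"
proof -
  define r where "r = (\<lambda>x. P x / Q x)"
  define m where "m = (MIN x\<in>A. r x)"
  define M where "M = (MAX x\<in>A. r x)"
  define \<mu> where "\<mu> = (\<Sum>x\<in>A. P x * r x)"
  have rpos: "x \<in> A \<Longrightarrow> r x > 0" for x using Ppos Qpos by (simp add: r_def)
  have PQ: "x \<in> A \<Longrightarrow> P x = Q x * r x" for x using Qpos[of x] by (simp add: r_def)
  have mle: "x \<in> A \<Longrightarrow> m \<le> r x" for x unfolding m_def using finA by auto
  have Mge: "x \<in> A \<Longrightarrow> r x \<le> M" for x unfolding M_def using finA by auto
  have mpos: "m > 0" unfolding m_def using finA neA rpos by auto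
  have QR: "(\<Sum>x\<in>A. Q x * r x) = 1" using Psum PQ by (metis (no_types, lifting) sum.cong)
  have hg: "hdiv g A P Q = - (\<Sum>x\<in>A. P x * f (r x))"
    unfolding hdiv_def r_def[symmetric]
    by (auto simp: g_def rpos PQ sum_negf[symmetric] intro!: sum.cong)
  have hf: "hdiv f A P Q = (\<Sum>x\<in>A. Q x * f (r x))" unfolding hdiv_def r_def ..
  have chi: "1 + chi2 A P Q = \<mu>"
  proof -
    have "chi2 A P Q = (\<Sum>x\<in>A. P x * r x - 2 * P x + Q x)"
      unfolding chi2_def using Qpos
    proof (intro sum.cong refl)
      fix x assume "x \<in> A"
      then have q: "Q x \<noteq> 0" using Qpos[of x] by simp
      show "(P x - Q x)^2 / Q x = P x * r x - 2 * P x + Q x"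
        using q unfolding r_def by (simp add: field_simps power2_eq_square)
    qed
    also have "\<dots> = \<mu> - 2 + 1" unfolding \<mu>_def
      by (simp add: sum.distrib sum_subtractf sum_distrib_left[symmetric] Psum Qsum)
    finally show ?thesis by simp
  qed
  have mupos: "\<mu> > 0" unfolding \<mu>_def using neA finA Ppos rpos
    by (intro sum_pos) auto
  have key: "(\<Sum>x\<in>A. P x * (f (r x) - f c - s * (r x - c)))
      = (\<Sum>x\<in>A. P x * f (r x)) - f c - s * (\<mu> - c)" for c s
    unfolding \<mu>_def
    by (simp add: algebra_simps sum.distrib sum_subtractf sum_distrib_left[symmetric]
        sum_distrib_right[symmetric] Psum)
  have keyQ: "(\<Sum>x\<in>A. Q x * (f (r x) - f c - s * (r x - c)))
      = (\<Sum>x\<in>A. Q x * f (r x)) - f c - s * (1 - c)" for c s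
    using QR
    by (simp add: algebra_simps sum.distrib sum_subtractf sum_distrib_left[symmetric]
        sum_distrib_right[symmetric] Qsum)
  have lower: "m * (\<Sum>x\<in>A. Q x * f (r x)) \<le> (\<Sum>x\<in>A. P x * f (r x)) - f \<mu>"
  proof -
    obtain s where s: "\<And>y. y > 0 \<Longrightarrow> f y \<ge> f \<mu> + s * (y - \<mu>)"
      using subgrad[OF f_convex mupos] by blast
    have "f 1 \<ge> f \<mu> + s * (1 - \<mu>)" using s[of 1] by simp
    have "m * (\<Sum>x\<in>A. Q x * f (r x)) \<le> m * ((\<Sum>x\<in>A. Q x * f (r x)) - f \<mu> - s * (1 - \<mu>))"
      using \<open>f 1 \<ge> _\<close> f1 mpos by (intro mult_left_mono) auto
    also have "\<dots> = (\<Sum>x\<in>A. m * (Q x * (f (r x) - f \<mu> - s * (r x - \<mu>))))"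
      by (simp add: keyQ sum_distrib_left[symmetric])
    also have "\<dots> \<le> (\<Sum>x\<in>A. P x * (f (r x) - f \<mu> - s * (r x - \<mu>)))"
    proof (intro sum_mono)
      fix x assume x: "x \<in> A"
      have B: "f (r x) - f \<mu> - s * (r x - \<mu>) \<ge> 0" using s[OF rpos[OF x]] by simp
      have "m * Q x \<le> P x" using mle[OF x] Qpos[OF x] PQ[OF x]
        by (simp add: mult.commute)
      then show "m * (Q x * (f (r x) - f \<mu> - s * (r x - \<mu>))) \<le> P x * (f (r x) - f \<mu> - s * (r x - \<mu>))"
        using mult_right_mono[OF _ B] by (simp add: mult.assoc[symmetric])
    qed
    also have "\<dots> = (\<Sum>x\<in>A. P x * f (r x)) - f \<mu>" by (simp add: key)
    finally show ?thesis .
  qed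
  have upper: "(\<Sum>x\<in>A. P x * f (r x)) - f \<mu> \<le> M * (\<Sum>x\<in>A. Q x * f (r x))"
  proof -
    obtain s where s: "\<And>y. y > 0 \<Longrightarrow> f y \<ge> f 1 + s * (y - 1)"
      using subgrad[OF f_convex, of 1] by auto
    have "(\<Sum>x\<in>A. P x * f (r x)) - f \<mu> \<le> (\<Sum>x\<in>A. P x * f (r x)) - f 1 - s * (\<mu> - 1)"
      using s[OF mupos] by simp
    also have "\<dots> = (\<Sum>x\<in>A. P x * (f (r x) - f 1 - s * (r x - 1)))" by (simp add: key)
    also have "\<dots> \<le> (\<Sum>x\<in>A. M * (Q x * (f (r x) - f 1 - s * (r x - 1))))"
    proof (intro sum_mono)
      fix x assume x: "x \<in> A"
      have B: "f (r x) - f 1 - s * (r x - 1) \<ge> 0" using s[OF rpos[OF x]] by simp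
      have "P x \<le> M * Q x" using Mge[OF x] Qpos[OF x] PQ[OF x]
        by (simp add: mult.commute)
      then show "P x * (f (r x) - f 1 - s * (r x - 1)) \<le> M * (Q x * (f (r x) - f 1 - s * (r x - 1)))"
        using mult_right_mono[OF _ B] by (simp add: mult.assoc[symmetric])
    qed
    also have "\<dots> = M * ((\<Sum>x\<in>A. Q x * f (r x)) - f 1 - s * (1 - 1))"
      by (simp only: keyQ sum_distrib_left[symmetric])
    also have "\<dots> = M * (\<Sum>x\<in>A. Q x * f (r x))" using f1 by simp
    finally show ?thesis .
  qed
  show ?thesis
    using lower upper unfolding hg hf chi m_def M_def r_def by simp
qed

end
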